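(* Let $\mathbb{M}(\mathbb{B})=\{F_A:A\in\mathrm{Sp}(1,1)\}$ and $\mathcal{M}(\mathbb{B})=\{\mathcal{F}_A:A\in\mathrm{Sp}(1,1)\}$. The set $\mathbb{M}(\mathbb{B})\cap\mathcal{M}(\mathbb{B})$ is the collection of transformations given by the following actions: (1) the right action of $\mathrm{SO}_0(1,1)$ on $\mathbb{B}$ by classical Möbius transformations, $q\mapsto F_{H}(q)$ for $H\in\mathrm{SO}_0(1,1)$; (2) the right action of $\mathrm{Sp}(1)$ on $\mathbb{B}$ given by $q\cdot u=qu$. That is, $\mathbb{M}(\mathbb{B})\cap\mathcal{M}(\mathbb{B})=\{q\mapsto F_H(q)u: H\in\mathrm{SO}_0(1,1),\ u\in\mathrm{Sp}(1)\}$.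
   Context: $\mathbb{H}$ denotes the quaternions, $\mathbb{B}=\{q\in\mathbb{H}:|q|<1\}$, $\mathrm{Sp}(1)=\{u\in\mathbb{H}:|u|=1\}$. Let $I_{1,1}=\operatorname{diag}(1,-1)$ and $\mathrm{Sp}(1,1)=\{A\in M_2(\mathbb{H}):A^*I_{1,1}A=I_{1,1}\}$. For $t\in\mathbb{R}$, $H(t)=\begin{pmatrix}\cosh t&\sinh t\\ \sinh t&\cosh t\end{pmatrix}$ and $\mathrm{SO}_0(1,1)=\{H(t):t\in\mathbb{R}\}$. For $A=\begin{pmatrix}a&c\\ b&d\end{pmatrix}\in\mathrm{Sp}(1,1)$, the classical Möbius transformation is $F_A(q)=(qc+d)^{-1}(qa+b)$. Slice regular functions on $\mathbb{B}$ are exactly the functions $f(q)=\sum_{n\ge0}q^na_n$ ($a_n\in\mathbb{H}$) with the series converging on $\mathbb{B}$. The $*$-product is $(\sum q^na_n)*(\sum q^nb_n)=\sum_n q^n\sum_{k=0}^n a_kb_{n-k}$; $f^c(q)=\sum q^n\overline{a_n}$, $f^s=f*f^c$, $f^{-*}=(f^s)^{-1}f^c$ (pointwise, off the zero set of $f^s$). For $a,b\in\mathbb{H}$ let $\ell_{a,b}(q)=qa+b$. For $A=\begin{pmatrix}a&c\\ b&d\end{pmatrix}\in\mathrm{Sp}(1,1)$, the regular Möbius transformation is $\mathcal{F}_A=\ell_{c,d}^{-*}*\ell_{a,b}$, which maps $\mathbb{B}$ diffeomorphically onto $\mathbb{B}$. *)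

theory Defs
  imports "HOL-Analysis.Analysis"
begin

datatype quat = Quat (qRe: real) (qI: real) (qJ: real) (qK: real)

lemma quat_eqI: "qRe x = qRe y \<Longrightarrow> qI x = qI y \<Longrightarrow> qJ x = qJ y \<Longrightarrow> qK x = qK y \<Longrightarrow> x = y"
  by (cases x; cases y) auto

lemma quat_eq_iff: "x = y \<longleftrightarrow> qRe x = qRe y \<and> qI x = qI y \<and> qJ x = qJ y \<and> qK x = qK y"
  by (auto intro: quat_eqI)

instantiation quat :: ab_group_add
begin
definition "0 = Quat 0 0 0 0"
definition "x + y = Quat (qRe x + qRe y) (qI x + qI y) (qJ x + qJ y) (qK x + qK y)"
definition "- x = Quat (- qRe x) (- qI x) (- qJ x) (- qK x)"
definition "x - y = Quat (qRe x - qRe y) (qI x - qI y) (qJ x - qJ y) (qK x - qK y)"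
lemma quat_add_sel[simp]:
  "qRe 0 = 0" "qI 0 = 0" "qJ 0 = 0" "qK 0 = 0"
  "qRe (x + y) = qRe x + qRe y" "qI (x + y) = qI x + qI y" "qJ (x + y) = qJ x + qJ y" "qK (x + y) = qK x + qK y"
  "qRe (- x) = - qRe x" "qI (- x) = - qI x" "qJ (- x) = - qJ x" "qK (- x) = - qK x"
  "qRe (x - y) = qRe x - qRe y" "qI (x - y) = qI x - qI y" "qJ (x - y) = qJ x - qJ y" "qK (x - y) = qK x - qK y"
  by (simp_all add: zero_quat_def plus_quat_def uminus_quat_def minus_quat_def)
instance by standard (simp_all add: quat_eq_iff)
end

instantiation quat :: real_vector
begin
definition "scaleR r x = Quat (r * qRe x) (r * qI x) (r * qJ x) (r * qK x)"
lemma quat_scaleR_sel[simp]: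
  "qRe (scaleR r x) = r * qRe x" "qI (scaleR r x) = r * qI x"
  "qJ (scaleR r x) = r * qJ x" "qK (scaleR r x) = r * qK x"
  by (simp_all add: scaleR_quat_def)
instance by standard (simp_all add: quat_eq_iff algebra_simps)
end

instantiation quat :: ring_1
begin
definition "1 = Quat 1 0 0 0"
definition "x * y = Quat
  (qRe x * qRe y - qI x * qI y - qJ x * qJ y - qK x * qK y)
  (qRe x * qI y + qI x * qRe y + qJ x * qK y - qK x * qJ y)
  (qRe x * qJ y - qI x * qK y + qJ x * qRe y + qK x * qI y)
  (qRe x * qK y + qI x * qJ y - qJ x * qI y + qK x * qRe y)"
lemma quat_mult_sel[simp]:
  "qRe 1 = 1" "qI 1 = 0" "qJ 1 = 0" "qK 1 = 0"
  "qRe (x * y) = qRe x * qRe y - qI x * qI y - qJ x * qJ y - qK x * qK y"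
  "qI (x * y) = qRe x * qI y + qI x * qRe y + qJ x * qK y - qK x * qJ y"
  "qJ (x * y) = qRe x * qJ y - qI x * qK y + qJ x * qRe y + qK x * qI y"
  "qK (x * y) = qRe x * qK y + qI x * qJ y - qJ x * qI y + qK x * qRe y"
  by (simp_all add: one_quat_def times_quat_def)
instance by standard (simp_all add: quat_eq_iff algebra_simps)
end

instantiation quat :: division_ring
begin
definition "inverse (x::quat) = (let n = (qRe x)\<^sup>2 + (qI x)\<^sup>2 + (qJ x)\<^sup>2 + (qK x)\<^sup>2 in
  Quat (qRe x / n) (- qI x / n) (- qJ x / n) (- qK x / n))"
definition "x div (y::quat) = x * inverse y"
instance
proof
  fix x y :: quat
  assume "x \<noteq> 0"
  then have n: "(qRe x)\<^sup>2 + (qI x)\<^sup>2 + (qJ x)\<^sup>2 + (qK x)\<^sup>2 \<noteq> 0"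
    by (simp add: quat_eq_iff add_nonneg_eq_0_iff)
  define n where "n = (qRe x)\<^sup>2 + (qI x)\<^sup>2 + (qJ x)\<^sup>2 + (qK x)\<^sup>2"
  have n0: "n \<noteq> 0" using n by (simp add: n_def)
  have inv: "inverse x = scaleR (1/n) (Quat (qRe x) (- qI x) (- qJ x) (- qK x))"
    by (simp add: inverse_quat_def n_def Let_def quat_eq_iff)
  have c1: "Quat (qRe x) (- qI x) (- qJ x) (- qK x) * x = Quat n 0 0 0"
    by (simp add: quat_eq_iff n_def power2_eq_square algebra_simps)
  have c2: "x * Quat (qRe x) (- qI x) (- qJ x) (- qK x) = Quat n 0 0 0"
    by (simp add: quat_eq_iff n_def power2_eq_square algebra_simps)
  have e: "qRe x * qRe x / n + qI x * qI x / n + qJ x * qJ x / n + qK x * qK x / n = 1"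
    using n0 by (simp add: n_def power2_eq_square flip: add_divide_distrib)
  show "inverse x * x = 1" "x * inverse x = 1"
    using e by (simp_all add: inv quat_eq_iff algebra_simps)
next
  show "inverse (0::quat) = 0" by (simp add: inverse_quat_def quat_eq_iff)
qed (simp add: divide_quat_def)
end

instantiation quat :: real_normed_div_algebra
begin
definition "norm (x::quat) = sqrt ((qRe x)\<^sup>2 + (qI x)\<^sup>2 + (qJ x)\<^sup>2 + (qK x)\<^sup>2)"
definition "sgn (x::quat) = x /\<^sub>R norm x"
definition "dist (x::quat) y = norm (x - y)"
definition [code del]: "(uniformity :: (quat \<times> quat) filter) = (INF e\<in>{0 <..}. principal {(x, y). dist x y < e})"
definition [code del]: "open (U :: quat set) \<longleftrightarrow> (\<forall>x\<in>U. eventually (\<lambda>(x', y). x' = x \<longrightarrow> y \<in> U) uniformity)"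
instance
proof
  fix x y :: quat and r :: real
  show "norm x = 0 \<longleftrightarrow> x = 0"
    by (simp add: norm_quat_def quat_eq_iff add_nonneg_eq_0_iff)
  show "norm (x + y) \<le> norm x + norm y"
  proof -
    have h: "norm (z::quat) = norm ((qRe z, qI z), (qJ z, qK z))" for z
      by (simp add: norm_quat_def norm_Pair add.assoc)
    have "((qRe (x+y), qI (x+y)), (qJ (x+y), qK (x+y))) = ((qRe x, qI x), (qJ x, qK x)) + ((qRe y, qI y), (qJ y, qK y))"
      by simp
    then show ?thesis
      using norm_triangle_ineq[of "((qRe x, qI x), (qJ x, qK x))" "((qRe y, qI y), (qJ y, qK y))"]
      by (simp only: h)
  qed
  show "norm (scaleR r x) = \<bar>r\<bar> * norm x"
    by (simp add: norm_quat_def power_mult_distrib flip: distrib_left real_sqrt_abs real_sqrt_mult)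
  show "norm (x * y) = norm x * norm y"
    by (simp add: norm_quat_def flip: real_sqrt_mult) (simp add: power2_eq_square algebra_simps)
  show "(scaleR r x) * y = scaleR r (x * y)" "x * scaleR r y = scaleR r (x * y)"
    by (simp_all add: quat_eq_iff algebra_simps)
qed (simp_all add: sgn_quat_def dist_quat_def uniformity_quat_def open_quat_def)
end


definition qcnj :: "quat \<Rightarrow> quat" where
  "qcnj x = Quat (qRe x) (- qI x) (- qJ x) (- qK x)"

definition qof_real :: "real \<Rightarrow> quat" where
  "qof_real r = Quat r 0 0 0"

section \<open>2x2 quaternionic matrices, stored row-major as (m11, m12, m21, m22).
  The paper's matrix A = [[a, c], [b, d]] is the tuple (a, c, b, d).\<close>

type_synonym qmat2 = "quat \<times> quat \<times> quat \<times> quat"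

fun qmat_mult :: "qmat2 \<Rightarrow> qmat2 \<Rightarrow> qmat2" where
  "qmat_mult (a11, a12, a21, a22) (b11, b12, b21, b22) =
     (a11 * b11 + a12 * b21, a11 * b12 + a12 * b22,
      a21 * b11 + a22 * b21, a21 * b12 + a22 * b22)"

fun qmat_star :: "qmat2 \<Rightarrow> qmat2" where
  "qmat_star (a11, a12, a21, a22) = (qcnj a11, qcnj a21, qcnj a12, qcnj a22)"

definition I11 :: qmat2 where
  "I11 = (1, 0, 0, - 1)"

definition Sp11 :: "qmat2 set" where
  "Sp11 = {A. qmat_mult (qmat_star A) (qmat_mult I11 A) = I11}"

definition Hmat :: "real \<Rightarrow> qmat2" where
  "Hmat t = (qof_real (cosh t), qof_real (sinh t), qof_real (sinh t), qof_real (cosh t))"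

fun classical_mobius :: "qmat2 \<Rightarrow> quat \<Rightarrow> quat" where
  "classical_mobius (a, c, b, d) q = inverse (q * c + d) * (q * a + b)"

definition sr_eval :: "(nat \<Rightarrow> quat) \<Rightarrow> quat \<Rightarrow> quat" where
  "sr_eval a q = (\<Sum>n. q ^ n * a n)"

definition slice_regular_B :: "(nat \<Rightarrow> quat) \<Rightarrow> bool" where
  "slice_regular_B a \<longleftrightarrow> (\<forall>q. norm q < 1 \<longrightarrow> summable (\<lambda>n. q ^ n * a n))"

definition star_prod :: "(nat \<Rightarrow> quat) \<Rightarrow> (nat \<Rightarrow> quat) \<Rightarrow> nat \<Rightarrow> quat" where
  "star_prod a b n = (\<Sum>k\<le>n. a k * b (n - k))"

definition sr_cnj :: "(nat \<Rightarrow> quat) \<Rightarrow> nat \<Rightarrow> quat" where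
  "sr_cnj a n = qcnj (a n)"

definition sr_sym :: "(nat \<Rightarrow> quat) \<Rightarrow> nat \<Rightarrow> quat" where
  "sr_sym a = star_prod a (sr_cnj a)"

definition star_inv :: "(nat \<Rightarrow> quat) \<Rightarrow> nat \<Rightarrow> quat" where
  "star_inv a = (SOME g. slice_regular_B g \<and>
      (\<forall>q. norm q < 1 \<and> sr_eval (sr_sym a) q \<noteq> 0 \<longrightarrow>
           sr_eval g q = inverse (sr_eval (sr_sym a) q) * sr_eval (sr_cnj a) q))"

definition lin_coeffs :: "quat \<Rightarrow> quat \<Rightarrow> nat \<Rightarrow> quat" where
  "lin_coeffs a b n = (if n = 0 then b else if n = 1 then a else 0)"

fun regular_mobius :: "qmat2 \<Rightarrow> quat \<Rightarrow> quat" where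
  "regular_mobius (a, c, b, d) = sr_eval (star_prod (star_inv (lin_coeffs c d)) (lin_coeffs a b))"

end

theory Submission
  imports Defs
begin

instance quat :: banach
proof
  fix X :: "nat \<Rightarrow> quat" assume C: "Cauchy X"
  define h where "h z = ((qRe z, qI z), (qJ z, qK z))" for z
  define k where "k p = Quat (fst (fst p)) (snd (fst p)) (fst (snd p)) (snd (snd p))" for p :: "(real \<times> real) \<times> (real \<times> real)"
  have nh: "norm (h z) = norm z" for z
    by (simp add: h_def norm_quat_def norm_Pair add.assoc)
  have hk: "h (k p) = p" for p by (simp add: h_def k_def)
  have hd: "h x - h y = h (x - y)" for x y by (simp add: h_def)
  have dh: "dist (h x) (h y) = dist x y" for x y by (simp add: dist_norm hd nh)
  have "Cauchy (\<lambda>n. h (X n))" using C by (simp add: Cauchy_def dh)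
  then obtain P where P: "(\<lambda>n. h (X n)) \<longlonglongrightarrow> P" using Cauchy_convergent_iff convergent_def by blast
  have "dist (X n) (k P) = dist (h (X n)) P" for n using dh[of "X n" "k P"] by (simp add: hk)
  then have "X \<longlonglongrightarrow> k P" using P by (simp add: tendsto_iff)
  then show "convergent X" by (auto simp: convergent_def)
qed


lemma qof_real_eq: "qof_real r = of_real r"
  by (simp add: qof_real_def of_real_def quat_eq_iff scaleR_quat_def one_quat_def)

lemma of_real_quat_sel[simp]:
  "qRe (of_real r :: quat) = r" "qI (of_real r :: quat) = 0" "qJ (of_real r :: quat) = 0" "qK (of_real r :: quat) = 0"
  by (simp_all add: of_real_def)

lemma of_real_comm: "(of_real r :: quat) * x = x * of_real r"
  by (simp add: quat_eq_iff)

definition qreal :: "quat \<Rightarrow> bool" where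
  "qreal x \<longleftrightarrow> qI x = 0 \<and> qJ x = 0 \<and> qK x = 0"

lemma qreal_eq: "qreal x \<Longrightarrow> x = of_real (qRe x)"
  by (simp add: qreal_def quat_eq_iff)

lemma qreal_comm: "qreal x \<Longrightarrow> x * y = y * x"
  by (simp add: qreal_def quat_eq_iff)

lemma comm_inverse: "(x::quat) * y = y * x \<Longrightarrow> x * inverse y = inverse y * x"
proof (cases "y = 0")
  case False
  assume h: "x * y = y * x"
  have "inverse y * x = inverse y * x * y * inverse y" using False by (simp add: mult.assoc)
  also have "... = inverse y * (y * x) * inverse y" by (simp add: mult.assoc h)
  also have "... = x * inverse y" using False by (simp add: mult.assoc[symmetric])
  finally show ?thesis by simp
qed simp

lemma qcnj_mult_self: "qcnj x * x = of_real ((norm x)\<^sup>2)"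
  by (simp add: quat_eq_iff qcnj_def norm_quat_def power2_eq_square algebra_simps)

lemma mult_qcnj_self: "x * qcnj x = of_real ((norm x)\<^sup>2)"
  by (simp add: quat_eq_iff qcnj_def norm_quat_def power2_eq_square algebra_simps)

lemma qcnj_sel[simp]: "qRe (qcnj x) = qRe x" "qI (qcnj x) = - qI x" "qJ (qcnj x) = - qJ x" "qK (qcnj x) = - qK x"
  by (simp_all add: qcnj_def)

lemma qcnj_0[simp]: "qcnj 0 = 0" by (simp add: quat_eq_iff)

lemma qcnj_mult: "qcnj (x * y) = qcnj y * qcnj x"
  by (simp add: quat_eq_iff algebra_simps)

lemma qcnj_of_real[simp]: "qcnj (of_real r) = of_real r"
  by (simp add: quat_eq_iff)

lemma bl_qRe: "bounded_linear qRe" and bl_qI: "bounded_linear qI"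
  and bl_qJ: "bounded_linear qJ" and bl_qK: "bounded_linear qK"
proof -
  have b: "\<bar>a\<bar> \<le> sqrt (a\<^sup>2 + b\<^sup>2 + c\<^sup>2 + d\<^sup>2)" for a b c d :: real
    by (metis add.assoc le_add_same_cancel1 real_sqrt_abs real_sqrt_le_mono zero_le_power2 add_nonneg_nonneg)
  have n: "norm x = sqrt ((qRe x)\<^sup>2 + (qI x)\<^sup>2 + (qJ x)\<^sup>2 + (qK x)\<^sup>2)" for x by (simp add: norm_quat_def)
  show "bounded_linear qRe"
    by (rule bounded_linear_intro[where K=1]) (auto simp: n b)
  show "bounded_linear qI"
    by (rule bounded_linear_intro[where K=1]) (auto simp: n, metis b add.commute add.left_commute)
  show "bounded_linear qJ"
    by (rule bounded_linear_intro[where K=1]) (auto simp: n, metis b add.commute add.left_commute)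
  show "bounded_linear qK"
    by (rule bounded_linear_intro[where K=1]) (auto simp: n, metis b add.commute add.left_commute)
qed


lemma real_powser_unique:
  fixes a :: "nat \<Rightarrow> real"
  assumes s: "s > 0" and h: "\<And>x. \<bar>x\<bar> < s \<Longrightarrow> (\<lambda>n. a n * x ^ n) sums 0"
  shows "a n = 0"
proof (induction n rule: less_induct)
  case (less n)
  have "(\<lambda>i. a (i + n) * x ^ i) sums 0" if x: "x \<noteq> 0" "norm x < s" for x
  proof -
    have "(\<lambda>i. a (i + n) * x ^ (i + n)) sums (0 - (\<Sum>i<n. a i * x ^ i))"
      using sums_split_initial_segment[OF h[of x]] x by simp
    also have "(\<Sum>i<n. a i * x ^ i) = 0" using less by simp
    finally have "(\<lambda>i. inverse (x ^ n) * (a (i + n) * x ^ (i + n))) sums (inverse (x ^ n) * 0)"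
      by (intro sums_mult) simp
    moreover have "inverse (x ^ n) * (a (i + n) * x ^ (i + n)) = a (i + n) * x ^ i" for i
      using x by (simp add: power_add field_simps)
    ultimately show ?thesis by simp
  qed
  then have "((\<lambda>x::real. 0::real) \<longlongrightarrow> a n) (at 0)"
    using powser_limit_0_strong[OF s, of "\<lambda>i. a (i + n)" "\<lambda>x. 0"] by simp
  then show ?case
    using LIM_const_eq by (metis)
qed

lemma quat_powser_unique:
  fixes v :: "nat \<Rightarrow> quat"
  assumes s: "s > 0" and h: "\<And>t. \<bar>t\<bar> < s \<Longrightarrow> (\<lambda>n. t ^ n *\<^sub>R v n) sums 0"
  shows "v n = 0"
proof -
  have c: "(\<lambda>n. f (v n) * t ^ n) sums 0" if bl: "bounded_linear f" and t: "\<bar>t\<bar> < s"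
     and fs: "\<And>r x. f (r *\<^sub>R x) = r * f x" for f :: "quat \<Rightarrow> real" and t
  proof -
    have "(\<lambda>n. f (t ^ n *\<^sub>R v n)) sums f 0"
      by (rule bounded_linear.sums[OF bl h[OF t]])
    then show ?thesis using fs[of 0 0] by (simp add: fs mult.commute)
  qed
  have "qRe (v n) = 0" by (rule real_powser_unique[OF s]) (rule c[OF bl_qRe], auto)
  moreover have "qI (v n) = 0" by (rule real_powser_unique[OF s]) (rule c[OF bl_qI], auto)
  moreover have "qJ (v n) = 0" by (rule real_powser_unique[OF s]) (rule c[OF bl_qJ], auto)
  moreover have "qK (v n) = 0" by (rule real_powser_unique[OF s]) (rule c[OF bl_qK], auto)
  ultimately show ?thesis by (simp add: quat_eq_iff)
qed


lemma sr_eval_fin2: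
  assumes "\<And>n. n > 2 \<Longrightarrow> f n = 0"
  shows "(\<lambda>n. q ^ n * f n) sums (f 0 + q * f 1 + q\<^sup>2 * f 2)"
    and "sr_eval f q = f 0 + q * f 1 + q\<^sup>2 * f 2"
proof -
  have "(\<lambda>n. q ^ n * f n) sums (\<Sum>n\<in>{0,1,2}. q ^ n * f n)"
    by (rule sums_finite) (use assms in \<open>auto simp: not_less_eq\<close>)
  then show s: "(\<lambda>n. q ^ n * f n) sums (f 0 + q * f 1 + q\<^sup>2 * f 2)" by (simp add: add.assoc)
  then show "sr_eval f q = f 0 + q * f 1 + q\<^sup>2 * f 2"
    unfolding sr_eval_def by (rule sums_unique[symmetric])
qed

lemma lin_eval: "sr_eval (lin_coeffs a b) q = q * a + b"
  by (subst sr_eval_fin2) (auto simp: lin_coeffs_def)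

lemma lin_sums: "(\<lambda>n. q ^ n * lin_coeffs a b n) sums (q * a + b)"
  using sr_eval_fin2(1)[of "lin_coeffs a b" q] by (auto simp: lin_coeffs_def add.commute)

lemma cnj_lin: "sr_cnj (lin_coeffs c d) = lin_coeffs (qcnj c) (qcnj d)"
  by (auto simp: sr_cnj_def lin_coeffs_def fun_eq_iff)

lemma sym_lin: "sr_sym (lin_coeffs c d) n =
   (if n = 0 then d * qcnj d else if n = 1 then d * qcnj c + c * qcnj d else if n = 2 then c * qcnj c else 0)"
proof -
  consider "n = 0" | "n = 1" | "n = 2" | "n > 2" by linarith
  then show ?thesis
  proof cases
    case 4
    have "(\<Sum>k\<le>n. lin_coeffs c d k * sr_cnj (lin_coeffs c d) (n - k)) = 0"
      by (rule sum.neutral) (use 4 in \<open>auto simp: lin_coeffs_def sr_cnj_def\<close>)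
    then show ?thesis using 4 by (simp add: sr_sym_def star_prod_def)
  qed (auto simp: sr_sym_def star_prod_def lin_coeffs_def sr_cnj_def numeral_2_eq_2)
qed

lemma sym_lin_eval: "sr_eval (sr_sym (lin_coeffs c d)) q =
   d * qcnj d + q * (d * qcnj c + c * qcnj d) + q\<^sup>2 * (c * qcnj c)"
  by (subst sr_eval_fin2) (auto simp: sym_lin)

lemma star_prod_lin: "star_prod g (lin_coeffs a b) n = g n * b + (if n = 0 then 0 else g (n - 1) * a)"
proof (cases n)
  case 0 then show ?thesis by (simp add: star_prod_def lin_coeffs_def)
next
  case (Suc m)
  have "(\<Sum>k\<le>m. g k * lin_coeffs a b (Suc m - k)) = g m * a"
  proof (cases m)
    case 0 then show ?thesis by (simp add: lin_coeffs_def)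
  next
    case (Suc m')
    have "(\<Sum>k\<le>m'. g k * lin_coeffs a b (Suc (Suc m') - k)) = 0"
      by (rule sum.neutral) (auto simp: lin_coeffs_def)
    then show ?thesis using Suc by (simp add: lin_coeffs_def)
  qed
  then show ?thesis using Suc by (simp add: star_prod_def lin_coeffs_def)
qed

lemma star_prod_lin_sums:
  assumes "summable (\<lambda>n. q ^ n * g n)"
  shows "(\<lambda>n. q ^ n * star_prod g (lin_coeffs a b) n) sums (sr_eval g q * b + q * sr_eval g q * a)"
proof -
  let ?G = "sr_eval g q"
  have s: "(\<lambda>n. q ^ n * g n) sums ?G" using assms by (simp add: sr_eval_def summable_sums)
  have t1: "(\<lambda>n. q ^ n * g n * b) sums (?G * b)" by (rule sums_mult2[OF s])
  have "(\<lambda>n. q * (q ^ n * g n) * a) sums (q * ?G * a)" by (rule sums_mult2[OF sums_mult[OF s]])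
  then have "(\<lambda>n. (\<lambda>n. q ^ n * (if n = 0 then 0 else g (n - 1) * a)) (Suc n)) sums (q * ?G * a)"
    by (simp add: mult.assoc)
  then have t2: "(\<lambda>n. q ^ n * (if n = 0 then 0 else g (n - 1) * a)) sums (q * ?G * a)"
    by (rule sums_Suc_imp[rotated]) simp
  show ?thesis using sums_add[OF t1 t2] by (simp add: star_prod_lin distrib_left mult.assoc)
qed


lemma qreal_of_real[simp]: "qreal (of_real r)" by (simp add: qreal_def)

lemma qreal_power_comm: "qreal x \<Longrightarrow> x * q ^ n = q ^ n * x"
  by (induction n) (simp_all add: qreal_comm mult.assoc, metis mult.assoc qreal_comm)

lemma qreal_power_comm2: "qreal x \<Longrightarrow> x * (q ^ n * y) = q ^ n * (x * y)"
  by (metis mult.assoc qreal_power_comm)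

lemma alpha_eq: "d * qcnj d = qcnj d * d" by (simp add: quat_eq_iff algebra_simps)
lemma gamma_eq: "c * qcnj c = qcnj c * c" by (simp add: quat_eq_iff algebra_simps)
lemma beta_eq: "d * qcnj c + c * qcnj d = qcnj d * c + qcnj c * d" by (simp add: quat_eq_iff algebra_simps)
lemma beta_real: "qreal (d * qcnj c + c * qcnj d)" by (simp add: qreal_def algebra_simps)
lemma alpha_real: "qreal (d * qcnj d)" by (simp add: qreal_def algebra_simps)

lemma star_inv_spec:
  assumes cd: "norm c < norm d"
  shows "\<exists>g. slice_regular_B g \<and>
      (\<forall>q. norm q < 1 \<and> sr_eval (sr_sym (lin_coeffs c d)) q \<noteq> 0 \<longrightarrow>
           sr_eval g q = inverse (sr_eval (sr_sym (lin_coeffs c d)) q) * sr_eval (sr_cnj (lin_coeffs c d)) q)"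
proof -
  have d0: "d \<noteq> 0" using cd by auto
  define m where "m = - (inverse d * c)"
  define g where "g n = m ^ n * inverse d" for n
  have rec: "d * g (Suc n) + c * g n = 0" for n
    using d0 by (simp add: g_def m_def mult.assoc[symmetric])
  have "norm m = norm (inverse d) * norm c" by (simp only: m_def norm_minus_cancel norm_mult)
  also have "\<dots> = norm c / norm d" by (simp add: norm_inverse divide_inverse mult.commute)
  finally have nm: "norm m < 1" using cd d0 by simp
  have summ: "summable (\<lambda>n. q ^ n * g n)" if q: "norm q < 1" for q
  proof (rule summable_comparison_test)
    show "summable (\<lambda>n. norm m ^ n * norm (inverse d))"
      using nm by (intro summable_mult2 summable_geometric) simp
    show "\<exists>N. \<forall>n\<ge>N. norm (q ^ n * g n) \<le> norm m ^ n * norm (inverse d)"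
    proof (intro exI allI impI)
      fix n :: nat
      have "norm q ^ n \<le> 1" using q by (simp add: power_le_one)
      then have "norm q ^ n * (norm m ^ n * norm (inverse d)) \<le> 1 * (norm m ^ n * norm (inverse d))"
        by (intro mult_right_mono) auto
      then show "norm (q ^ n * g n) \<le> norm m ^ n * norm (inverse d)"
        by (simp add: g_def norm_mult norm_power mult.assoc)
    qed
  qed
  have main: "sr_eval (sr_sym (lin_coeffs c d)) q * sr_eval g q = qcnj d + q * qcnj c"
    if q: "norm q < 1" for q
  proof -
    define \<alpha> where "\<alpha> = d * qcnj d"
    define \<beta> where "\<beta> = d * qcnj c + c * qcnj d"
    define \<gamma> where "\<gamma> = c * qcnj c"
    have ra: "qreal \<alpha>" "qreal \<beta>" "qreal \<gamma>"
      by (simp_all add: \<alpha>_def \<beta>_def \<gamma>_def alpha_real beta_real)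
    let ?G = "sr_eval g q"
    have s: "(\<lambda>n. q ^ n * g n) sums ?G" using summ[OF q] by (simp add: sr_eval_def summable_sums)
    define b2 where "b2 n = (case n of 0 \<Rightarrow> 0 | Suc k \<Rightarrow> \<beta> * g k)" for n
    define b3 where "b3 n = (case n of Suc (Suc k) \<Rightarrow> \<gamma> * g k | _ \<Rightarrow> 0)" for n
    have t1: "(\<lambda>n. q ^ n * (\<alpha> * g n)) sums (\<alpha> * ?G)"
      using sums_mult[OF s, of \<alpha>] by (simp add: mult.assoc[symmetric] qreal_power_comm[OF ra(1)])
    have "(\<lambda>n. q * \<beta> * (q ^ n * g n)) sums (q * \<beta> * ?G)" by (rule sums_mult[OF s])
    then have "(\<lambda>n. (\<lambda>n. q ^ n * b2 n) (Suc n)) sums (q * \<beta> * ?G)"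
      by (simp add: b2_def mult.assoc qreal_power_comm2[OF ra(2)])
    then have t2: "(\<lambda>n. q ^ n * b2 n) sums (q * \<beta> * ?G)"
      by (rule sums_Suc_imp[rotated]) (simp add: b2_def)
    have "(\<lambda>n. q\<^sup>2 * \<gamma> * (q ^ n * g n)) sums (q\<^sup>2 * \<gamma> * ?G)" by (rule sums_mult[OF s])
    then have "(\<lambda>n. (\<lambda>n. (\<lambda>n. q ^ n * b3 n) (Suc n)) (Suc n)) sums (q\<^sup>2 * \<gamma> * ?G)"
      by (simp add: b3_def mult.assoc qreal_power_comm2[OF ra(3)] power2_eq_square)
    then have "(\<lambda>n. (\<lambda>n. q ^ n * b3 n) (Suc n)) sums (q\<^sup>2 * \<gamma> * ?G)"
      by (rule sums_Suc_imp[rotated]) (simp add: b3_def)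
    then have t3: "(\<lambda>n. q ^ n * b3 n) sums (q\<^sup>2 * \<gamma> * ?G)"
      by (rule sums_Suc_imp[rotated]) (simp add: b3_def)
    have "(\<lambda>n. q ^ n * (\<alpha> * g n + b2 n + b3 n)) sums (\<alpha> * ?G + q * \<beta> * ?G + q\<^sup>2 * \<gamma> * ?G)"
      using sums_add[OF sums_add[OF t1 t2] t3] by (simp add: distrib_left)
    moreover have "\<alpha> * g n + b2 n + b3 n = lin_coeffs (qcnj c) (qcnj d) n" for n
    proof -
      have e: "\<alpha> = qcnj d * d" "\<beta> = qcnj d * c + qcnj c * d" "\<gamma> = qcnj c * c"
        by (simp_all add: \<alpha>_def \<beta>_def \<gamma>_def alpha_eq beta_eq gamma_eq)
      consider "n = 0" | "n = 1" | k where "n = Suc (Suc k)" by (metis One_nat_def not0_implies_Suc)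
      then show ?thesis
      proof cases
        case 1 then show ?thesis using d0 by (simp add: b2_def b3_def lin_coeffs_def e g_def mult.assoc)
      next
        case 2
        have "qcnj d * d * g 1 + (qcnj d * c + qcnj c * d) * g 0
            = qcnj d * (d * g (Suc 0) + c * g 0) + qcnj c * (d * g 0)"
          by (simp add: algebra_simps)
        also have "\<dots> = qcnj c" using d0 by (simp only: rec) (simp add: g_def)
        finally show ?thesis using 2 by (simp add: b2_def b3_def lin_coeffs_def e)
      next
        case 3
        have "qcnj d * d * g (Suc (Suc k)) + (qcnj d * c + qcnj c * d) * g (Suc k) + qcnj c * c * g k
            = qcnj d * (d * g (Suc (Suc k)) + c * g (Suc k)) + qcnj c * (d * g (Suc k) + c * g k)"
          by (simp add: algebra_simps)
        also have "\<dots> = 0" by (simp only: rec) simp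
        finally show ?thesis using 3 by (simp add: b2_def b3_def lin_coeffs_def e)
      qed
    qed
    ultimately have "(\<lambda>n. q ^ n * lin_coeffs (qcnj c) (qcnj d) n) sums (\<alpha> * ?G + q * \<beta> * ?G + q\<^sup>2 * \<gamma> * ?G)"
      by simp
    then have "\<alpha> * ?G + q * \<beta> * ?G + q\<^sup>2 * \<gamma> * ?G = q * qcnj c + qcnj d"
      using lin_sums sums_unique2 by blast
    then show ?thesis
      by (simp add: sym_lin_eval \<alpha>_def \<beta>_def \<gamma>_def algebra_simps)
  qed
  show ?thesis
  proof (intro exI conjI allI impI)
    show "slice_regular_B g" using summ by (simp add: slice_regular_B_def)
    fix q assume h: "norm q < 1 \<and> sr_eval (sr_sym (lin_coeffs c d)) q \<noteq> 0"
    then show "sr_eval g q = inverse (sr_eval (sr_sym (lin_coeffs c d)) q) * sr_eval (sr_cnj (lin_coeffs c d)) q"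
    proof -
      let ?S = "sr_eval (sr_sym (lin_coeffs c d)) q"
      have "sr_eval g q = inverse ?S * (?S * sr_eval g q)" using h by (simp add: mult.assoc[symmetric])
      also have "\<dots> = inverse ?S * (qcnj d + q * qcnj c)" using main[of q] h by simp
      finally show ?thesis by (simp add: cnj_lin lin_eval add.commute)
    qed
  qed
qed

lemma star_inv_props:
  assumes "norm c < norm d"
  shows "slice_regular_B (star_inv (lin_coeffs c d))"
    and "\<And>q. norm q < 1 \<Longrightarrow> sr_eval (sr_sym (lin_coeffs c d)) q \<noteq> 0 \<Longrightarrow>
           sr_eval (star_inv (lin_coeffs c d)) q = inverse (sr_eval (sr_sym (lin_coeffs c d)) q) * sr_eval (sr_cnj (lin_coeffs c d)) q"
  using someI_ex[OF star_inv_spec[OF assms]] unfolding star_inv_def by blast+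


lemma scaleR_power_q: "((t::real) *\<^sub>R (q::quat)) ^ n = t ^ n *\<^sub>R q ^ n"
  by (induction n) (simp_all add: mult_scaleR_left mult_scaleR_right)

lemma Sp11_iff: "(a, c, b, d) \<in> Sp11 \<longleftrightarrow>
   qcnj a * a - qcnj b * b = 1 \<and> qcnj a * c - qcnj b * d = 0 \<and>
   qcnj c * a - qcnj d * b = 0 \<and> qcnj c * c - qcnj d * d = - 1"
  by (simp add: Sp11_def I11_def algebra_simps)

lemma Sp11_norms:
  assumes "(a, c, b, d) \<in> Sp11"
  shows "(norm a)\<^sup>2 = 1 + (norm b)\<^sup>2" "(norm d)\<^sup>2 = 1 + (norm c)\<^sup>2" "norm c < norm d"
proof -
  have "(of_real ((norm a)\<^sup>2 - (norm b)\<^sup>2) :: quat) = of_real 1"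
    using assms by (simp add: Sp11_iff qcnj_mult_self)
  then have "(norm a)\<^sup>2 - (norm b)\<^sup>2 = 1" by (metis of_real_eq_iff)
  then show "(norm a)\<^sup>2 = 1 + (norm b)\<^sup>2" by simp
  have "(of_real ((norm c)\<^sup>2 - (norm d)\<^sup>2) :: quat) = of_real (-1)"
    using assms by (simp add: Sp11_iff qcnj_mult_self)
  then have "(norm c)\<^sup>2 - (norm d)\<^sup>2 = -1" by (metis of_real_eq_iff)
  then show dd: "(norm d)\<^sup>2 = 1 + (norm c)\<^sup>2" by simp
  then have "(norm c)\<^sup>2 < (norm d)\<^sup>2" by simp
  then show "norm c < norm d" using power_less_imp_less_base by fastforce
qed

lemma denom_nz:
  fixes c d p :: quat
  assumes "norm c < norm d" "norm p < 1"
  shows "p * c + d \<noteq> 0"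
proof
  assume "p * c + d = 0"
  then have "d = - (p * c)" by (simp add: eq_neg_iff_add_eq_0 add.commute)
  then have "norm d = norm p * norm c" by (simp add: norm_mult)
  also have "\<dots> \<le> norm c" using assms by (simp add: mult_left_le_one_le)
  finally show False using assms by simp
qed

lemma coeff_eqs:
  assumes cd: "norm c < norm d"
    and hs: "\<forall>p. norm p < 1 \<longrightarrow> (\<lambda>n. p ^ n * h n) sums classical_mobius (a, c, b, d) p"
    and q: "norm q < 1"
  shows "d * h 0 = b" "d * q * h 1 + q * c * h 0 = q * a" "d * q\<^sup>2 * h 2 + q * c * q * h 1 = 0"
proof -
  define w where "w n = q ^ n * h n" for n
  define v where "v n = d * w n + (case n of 0 \<Rightarrow> 0 | Suc m \<Rightarrow> q * c * w m) - lin_coeffs (q * a) b n" for n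
  have "(\<lambda>n. t ^ n *\<^sub>R v n) sums 0" if t: "\<bar>t\<bar> < 1" for t
  proof -
    define p where "p = t *\<^sub>R q"
    have np: "norm p < 1" using t q
      by (simp add: p_def) (metis abs_ge_zero less_one mult_strict_mono' norm_ge_zero mult_1_right order_less_imp_le)
    define F where "F = classical_mobius (a, c, b, d) p"
    have s: "(\<lambda>n. t ^ n *\<^sub>R w n) sums F"
      using hs[rule_format, OF np] by (simp add: F_def p_def w_def scaleR_power_q mult_scaleR_left)
    have nz: "p * c + d \<noteq> 0" by (rule denom_nz[OF cd np])
    have "d * F + p * c * F = (p * c + d) * F" by (simp add: algebra_simps)
    also have "\<dots> = ((p * c + d) * inverse (p * c + d)) * (p * a + b)" by (simp add: F_def mult.assoc)
    finally have eq: "d * F + p * c * F = p * a + b" using nz by simp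
    have t1: "(\<lambda>n. t ^ n *\<^sub>R (d * w n)) sums (d * F)"
      using sums_mult[OF s, of d] by (simp add: mult_scaleR_right)
    have "(\<lambda>n. p * c * (t ^ n *\<^sub>R w n)) sums (p * c * F)" by (rule sums_mult[OF s])
    then have "(\<lambda>n. (\<lambda>n. t ^ n *\<^sub>R (case n of 0 \<Rightarrow> 0 | Suc m \<Rightarrow> q * c * w m)) (Suc n)) sums (p * c * F)"
      by (simp add: p_def mult_scaleR_right mult_scaleR_left mult.commute)
    then have t2: "(\<lambda>n. t ^ n *\<^sub>R (case n of 0 \<Rightarrow> 0 | Suc m \<Rightarrow> q * c * w m)) sums (p * c * F)"
      by (rule sums_Suc_imp[rotated]) simp
    have t3: "(\<lambda>n. t ^ n *\<^sub>R lin_coeffs (q * a) b n) sums (\<Sum>n\<in>{0,1}. t ^ n *\<^sub>R lin_coeffs (q * a) b n)"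
      by (rule sums_finite) (auto simp: lin_coeffs_def)
    have "(\<lambda>n. t ^ n *\<^sub>R (d * w n) + t ^ n *\<^sub>R (case n of 0 \<Rightarrow> 0 | Suc m \<Rightarrow> q * c * w m)
            - t ^ n *\<^sub>R lin_coeffs (q * a) b n)
          sums (d * F + p * c * F - (\<Sum>n\<in>{0,1}. t ^ n *\<^sub>R lin_coeffs (q * a) b n))"
      by (intro sums_diff sums_add t1 t2 t3)
    moreover have "d * F + p * c * F - (\<Sum>n\<in>{0,1}. t ^ n *\<^sub>R lin_coeffs (q * a) b n) = 0"
      using eq by (simp add: lin_coeffs_def p_def mult_scaleR_left add.commute)
    ultimately show ?thesis by (simp add: v_def scaleR_diff_right scaleR_add_right)
  qed
  then have v0: "v n = 0" for n by (intro quat_powser_unique[of 1]) auto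
  show "d * h 0 = b" using v0[of 0] by (simp add: v_def w_def lin_coeffs_def)
  show "d * q * h 1 + q * c * h 0 = q * a" using v0[of 1] by (simp add: v_def w_def lin_coeffs_def mult.assoc)
  show "d * q\<^sup>2 * h 2 + q * c * q * h 1 = 0" using v0[of 2]
    by (simp add: v_def w_def lin_coeffs_def mult.assoc numeral_2_eq_2)
qed


lemma qreal_from_comm:
  assumes "d * Quat 0 (1/2) 0 0 = Quat 0 (1/2) 0 0 * d" "d * Quat 0 0 (1/2) 0 = Quat 0 0 (1/2) 0 * d"
  shows "qreal d"
  using assms by (simp add: quat_eq_iff qreal_def)

lemma norm_half_i: "norm (Quat 0 (1/2) 0 0) < 1" and norm_half_j: "norm (Quat 0 0 (1/2) 0) < 1"
  by (simp_all add: norm_quat_def power2_eq_square real_sqrt_lt_1_iff)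

lemma real_cd:
  assumes Sp: "(a, c, b, d) \<in> Sp11"
    and hs: "\<forall>p. norm p < 1 \<longrightarrow> (\<lambda>n. p ^ n * h n) sums classical_mobius (a, c, b, d) p"
  shows "qreal c \<and> qreal d"
proof -
  note nr = Sp11_norms[OF Sp]
  have cd: "norm c < norm d" by (rule nr(3))
  note E = coeff_eqs[where a=a and b=b and c=c and d=d and h=h, OF cd hs]
  define q0 :: quat where "q0 = Quat (1/2) 0 0 0"
  have nq0: "norm q0 < 1" by (simp add: q0_def norm_quat_def power2_eq_square real_sqrt_lt_1_iff)
  have q0nz: "q0 \<noteq> 0" by (simp add: q0_def quat_eq_iff)
  have "q0 * (d * h 1 + c * h 0) = q0 * a"
  proof -
    have "q0 * (d * h 1 + c * h 0) = d * q0 * h 1 + q0 * c * h 0"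
      by (simp add: q0_def quat_eq_iff algebra_simps)
    then show ?thesis using E(2)[OF nq0] by simp
  qed
  then have K1: "d * h 1 = a - c * h 0" using q0nz by (simp add: eq_diff_eq)
  have h1: "h 1 \<noteq> 0"
  proof
    assume "h 1 = 0"
    then have "a = c * h 0" using K1 by simp
    then have "norm a \<le> norm b"
      using E(1)[OF nq0, symmetric] cd by (simp add: norm_mult mult_right_mono)
    then have "(norm a)\<^sup>2 \<le> (norm b)\<^sup>2" by (simp add: power_mono)
    then show False using nr(1) by simp
  qed
  have dcomm: "d * q = q * d" if q: "norm q < 1" for q
  proof -
    have "d * q * h 1 = q * a - q * c * h 0" using E(2)[OF q] by (simp add: eq_diff_eq)
    also have "\<dots> = q * (a - c * h 0)" by (simp add: algebra_simps)
    also have "\<dots> = q * (d * h 1)" by (simp only: K1)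
    finally have "d * q * h 1 = q * (d * h 1)" .
    then have "(d * q - q * d) * h 1 = 0" by (simp add: algebra_simps)
    then show ?thesis using h1 by simp
  qed
  have dr: "qreal d" by (rule qreal_from_comm; rule dcomm; simp add: norm_half_i norm_half_j)
  have "q0\<^sup>2 * (d * h 2 + c * h 1) = 0"
  proof -
    have "q0\<^sup>2 * (d * h 2 + c * h 1) = d * q0\<^sup>2 * h 2 + q0 * c * q0 * h 1"
      by (simp add: q0_def quat_eq_iff algebra_simps power2_eq_square)
    then show ?thesis using E(3)[OF nq0] by simp
  qed
  then have K2: "d * h 2 = - (c * h 1)" using q0nz by (simp add: eq_neg_iff_add_eq_0)
  have ccomm: "c * q = q * c" if q: "norm q < 1" "q \<noteq> 0" for q
  proof -
    have "d * q\<^sup>2 * h 2 = q\<^sup>2 * (d * h 2)" using qreal_power_comm[OF dr, of q 2] by (simp add: mult.assoc)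
    moreover have "q * c * q * h 1 = - (d * q\<^sup>2 * h 2)" using E(3)[OF q(1)]
      by (simp add: eq_neg_iff_add_eq_0 add.commute)
    ultimately have "q * c * q * h 1 = - (q\<^sup>2 * (d * h 2))" by simp
    also have "\<dots> = q\<^sup>2 * (c * h 1)" by (simp only: K2) simp
    finally have "q * c * q * h 1 = q\<^sup>2 * (c * h 1)" .
    then have "q * ((c * q - q * c) * h 1) = 0" by (simp add: algebra_simps power2_eq_square)
    then show ?thesis using h1 q(2) by simp
  qed
  have cr: "qreal c" by (rule qreal_from_comm; rule ccomm; simp add: norm_half_i norm_half_j quat_eq_iff)
  show ?thesis using cr dr by simp
qed


lemma form_from_real:
  assumes Sp: "(a, c, b, d) \<in> Sp11" and cr: "qreal c" and dr: "qreal d"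
  shows "\<exists>t u. norm u = 1 \<and> (\<forall>q. classical_mobius (a, c, b, d) q = classical_mobius (Hmat t) q * u)"
proof -
  define \<gamma> where "\<gamma> = qRe c"
  define \<delta> where "\<delta> = qRe d"
  have c: "c = of_real \<gamma>" using qreal_eq[OF cr] by (simp add: \<gamma>_def)
  have d: "d = of_real \<delta>" using qreal_eq[OF dr] by (simp add: \<delta>_def)
  note nr = Sp11_norms[OF Sp]
  have dd: "\<delta>\<^sup>2 = 1 + \<gamma>\<^sup>2" using nr(2) by (simp add: c d)
  have d0: "\<delta> \<noteq> 0" using dd by (auto simp: add_nonneg_eq_0_iff)
  have "qcnj c * a - qcnj d * b = 0" using Sp by (simp add: Sp11_iff)
  then have ga: "of_real \<gamma> * a = of_real \<delta> * b" by (simp add: c d)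
  define u where "u = of_real (1 / \<delta>) * a"
  have a: "a = of_real \<delta> * u" using d0 by (simp add: u_def mult.assoc[symmetric] of_real_mult[symmetric])
  have b: "b = of_real \<gamma> * u"
  proof -
    have inv1: "(of_real (1 / \<delta>) :: quat) * of_real \<delta> = 1"
      by (simp only: of_real_mult[symmetric]) (simp add: d0)
    have "b = (of_real (1 / \<delta>) * of_real \<delta>) * b" by (simp only: inv1) simp
    also have "\<dots> = of_real (1 / \<delta>) * (of_real \<delta> * b)" by (simp only: mult.assoc)
    also have "\<dots> = of_real (1 / \<delta>) * (of_real \<gamma> * a)" by (simp only: ga)
    also have "\<dots> = of_real \<gamma> * u" unfolding u_def
      by (simp only: mult.assoc[symmetric] of_real_mult[symmetric] mult.commute)
    finally show ?thesis .
  qed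
  have nu: "norm u = 1"
  proof -
    have "(norm a)\<^sup>2 = 1 + (norm b)\<^sup>2" by (rule nr(1))
    then have "\<delta>\<^sup>2 * (norm u)\<^sup>2 = 1 + \<gamma>\<^sup>2 * (norm u)\<^sup>2"
      by (simp add: a b norm_mult power_mult_distrib)
    then have "(norm u)\<^sup>2 * (\<delta>\<^sup>2 - \<gamma>\<^sup>2) = 1" by (simp add: algebra_simps)
    then have "(norm u)\<^sup>2 = 1" using dd by simp
    then show ?thesis using norm_ge_zero[of u] by (auto simp: power2_eq_1_iff)
  qed
  have cm: "classical_mobius (a, c, b, d) q = inverse (q * of_real \<gamma> + of_real \<delta>) * (q * of_real \<delta> + of_real \<gamma>) * u" for q
    by (simp add: a b c d mult.assoc distrib_right)
  show ?thesis
  proof (cases "\<delta> > 0")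
    case True
    define t where "t = arsinh \<gamma>"
    have st: "sinh t = \<gamma>" by (simp add: t_def)
    have ct: "cosh t = \<delta>" using True dd by (simp add: t_def cosh_arsinh_real real_sqrt_unique add.commute)
    show ?thesis
    proof (intro exI[of _ t] exI[of _ u] conjI allI)
      fix q show "classical_mobius (a, c, b, d) q = classical_mobius (Hmat t) q * u"
        unfolding cm by (simp add: Hmat_def qof_real_eq st ct mult.assoc)
    qed (rule nu)
  next
    case False
    then have dn: "\<delta> < 0" using d0 by simp
    define t where "t = arsinh (- \<gamma>)"
    have st: "sinh t = - \<gamma>" by (simp add: t_def)
    have "sqrt (\<gamma>\<^sup>2 + 1) = - \<delta>" using dn dd by (simp add: real_sqrt_unique add.commute)
    then have ct: "cosh t = - \<delta>" by (simp add: t_def cosh_arsinh_real)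
    have e: "inverse (q * of_real (- \<gamma>) + of_real (- \<delta>)) * (q * of_real (- \<delta>) + of_real (- \<gamma>))
           = inverse (q * of_real \<gamma> + of_real \<delta>) * (q * of_real \<delta> + of_real \<gamma>)" for q :: quat
    proof -
      have e1: "q * of_real (- \<gamma>) + of_real (- \<delta>) = - (q * of_real \<gamma> + of_real \<delta>)" by simp
      have e2: "q * of_real (- \<delta>) + of_real (- \<gamma>) = - (q * of_real \<delta> + of_real \<gamma>)" by simp
      show ?thesis by (simp only: e1 e2 inverse_minus_eq minus_mult_minus)
    qed
    show ?thesis
    proof (intro exI[of _ t] exI[of _ u] conjI allI)
      fix q show "classical_mobius (a, c, b, d) q = classical_mobius (Hmat t) q * u"
      proof -
        have "classical_mobius (a, c, b, d) q = inverse (q * of_real \<gamma> + of_real \<delta>) * (q * of_real \<delta> + of_real \<gamma>) * u"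
          by (rule cm)
        also have "\<dots> = classical_mobius (Hmat t) q * u"
          by (simp only: Hmat_def qof_real_eq st ct classical_mobius.simps e)
        finally show ?thesis .
      qed
    qed (rule nu)
  qed
qed


lemma qcnj_ofr_u: "qcnj (of_real r * u) * (of_real r' * u) = of_real (r * r') * (qcnj u * u)"
  by (simp add: quat_eq_iff algebra_simps)

lemma super:
  fixes t :: real and u :: quat
  assumes nu: "norm u = 1"
  defines "A \<equiv> (qof_real (cosh t) * u, qof_real (sinh t), qof_real (sinh t) * u, qof_real (cosh t))"
  shows "A \<in> Sp11"
    and "\<And>q. classical_mobius A q = classical_mobius (Hmat t) q * u"
    and "\<And>q. norm q < 1 \<Longrightarrow> regular_mobius A q = classical_mobius (Hmat t) q * u"
proof -
  define s where "s = sinh t"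
  define k where "k = cosh t"
  have ks: "k\<^sup>2 - s\<^sup>2 = 1" by (simp add: s_def k_def hyperbolic_pythagoras)
  have uu: "qcnj u * u = 1" using nu by (simp add: qcnj_mult_self)
  have A: "A = (of_real k * u, of_real s, of_real s * u, of_real k)"
    by (simp add: A_def qof_real_eq s_def k_def)
  show "A \<in> Sp11"
    unfolding A Sp11_iff
  proof (intro conjI)
    show "qcnj (of_real k * u) * (of_real k * u) - qcnj (of_real s * u) * (of_real s * u) = 1"
      by (simp only: qcnj_ofr_u uu mult_1_right of_real_diff[symmetric]) (simp add: ks[unfolded power2_eq_square])
    show "qcnj (of_real s) * (of_real s) - qcnj (of_real k) * of_real k = (-1 :: quat)"
    proof -
      have r: "s * s - k * k = -1" using ks by (simp add: power2_eq_square)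
      have "qcnj (of_real s) * (of_real s) - qcnj (of_real k) * of_real k = (of_real (s * s - k * k) :: quat)"
        by simp
      also have "\<dots> = -1" by (simp only: r) simp
      finally show ?thesis .
    qed
  qed (simp_all add: quat_eq_iff algebra_simps)
  show cl: "classical_mobius A q = classical_mobius (Hmat t) q * u" for q
    by (simp add: A Hmat_def qof_real_eq s_def k_def mult.assoc distrib_right)
  fix q :: quat assume q: "norm q < 1"
  define c :: quat where "c = of_real s"
  define d :: quat where "d = of_real k"
  have kpos: "k > 0" by (simp add: k_def)
  have "\<bar>s\<bar>\<^sup>2 < k\<^sup>2" using ks by simp
  then have "\<bar>s\<bar> < k" using kpos power_less_imp_less_base by fastforce
  then have cd: "norm c < norm d" using kpos by (simp add: c_def d_def)
  define G where "G = star_inv (lin_coeffs c d)"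
  note sp = star_inv_props[OF cd]
  have summ: "summable (\<lambda>n. q ^ n * G n)" using sp(1) q by (simp add: G_def slice_regular_B_def)
  have reg: "regular_mobius A q = sr_eval G q * (c * u) + q * sr_eval G q * (d * u)"
    using star_prod_lin_sums[OF summ, of "d * u" "c * u"] unfolding A
    by (simp add: G_def c_def d_def sr_eval_def sums_iff)
  define P where "P = q * c + d"
  have Pnz: "P \<noteq> 0" unfolding P_def by (rule denom_nz[OF cd q])
  have S: "sr_eval (sr_sym (lin_coeffs c d)) q = P * P"
    by (simp add: sym_lin_eval P_def c_def d_def quat_eq_iff algebra_simps power2_eq_square)
  have Fc: "sr_eval (sr_cnj (lin_coeffs c d)) q = P"
    by (simp add: cnj_lin lin_eval P_def c_def d_def)
  have "sr_eval G q = inverse (P * P) * P"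
    using sp(2)[OF q] Pnz by (simp add: G_def S Fc)
  also have "\<dots> = inverse P" using Pnz by (simp add: nonzero_inverse_mult_distrib mult.assoc)
  finally have GP: "sr_eval G q = inverse P" .
  have qP: "q * inverse P = inverse P * q"
    by (rule comm_inverse) (simp add: P_def c_def d_def quat_eq_iff algebra_simps)
  have "regular_mobius A q = inverse P * (c * u) + inverse P * q * (d * u)"
    by (simp add: reg GP qP)
  also have "\<dots> = inverse P * (q * d + c) * u" by (simp add: algebra_simps)
  also have "\<dots> = classical_mobius (Hmat t) q * u"
    by (simp add: Hmat_def qof_real_eq P_def c_def d_def s_def k_def)
  finally show "regular_mobius A q = classical_mobius (Hmat t) q * u" .
qed


theorem corollary3p2:
  shows "{restrict (classical_mobius A) (ball 0 1) | A. A \<in> Sp11}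
           \<inter> {restrict (regular_mobius A) (ball 0 1) | A. A \<in> Sp11}
         = {restrict (\<lambda>q. classical_mobius (Hmat t) q * u) (ball 0 1) | t u. norm u = 1}"
proof (intro set_eqI iffI)
  fix f
  assume "f \<in> {restrict (classical_mobius A) (ball 0 1) | A. A \<in> Sp11}
           \<inter> {restrict (regular_mobius A) (ball 0 1) | A. A \<in> Sp11}"
  then obtain A A' where A: "A \<in> Sp11" "f = restrict (classical_mobius A) (ball 0 1)"
    and A': "A' \<in> Sp11" "f = restrict (regular_mobius A') (ball 0 1)" by blast
  obtain a c b d where Aeq: "A = (a, c, b, d)" by (cases A) auto
  obtain a' c' b' d' where A'eq: "A' = (a', c', b', d')" by (cases A') auto
  define h where "h = star_prod (star_inv (lin_coeffs c' d')) (lin_coeffs a' b')"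
  have cd': "norm c' < norm d'" using Sp11_norms(3) A'(1) A'eq by simp
  have hs: "\<forall>p. norm p < 1 \<longrightarrow> (\<lambda>n. p ^ n * h n) sums classical_mobius (a, c, b, d) p"
  proof (intro allI impI)
    fix p :: quat assume p: "norm p < 1"
    have summ: "summable (\<lambda>n. p ^ n * star_inv (lin_coeffs c' d') n)"
      using star_inv_props(1)[OF cd'] p by (simp add: slice_regular_B_def)
    have s1: "(\<lambda>n. p ^ n * h n) sums regular_mobius A' p"
      using star_prod_lin_sums[OF summ, of a' b'] summable_sums
      by (simp add: A'eq h_def sr_eval_def sums_iff)
    have "restrict (classical_mobius A) (ball 0 1) p = restrict (regular_mobius A') (ball 0 1) p"
      using A(2) A'(2) by simp
    then have "classical_mobius A p = regular_mobius A' p" using p by simp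
    then show "(\<lambda>n. p ^ n * h n) sums classical_mobius (a, c, b, d) p" using s1 Aeq by simp
  qed
  have "qreal c \<and> qreal d" using real_cd[OF _ hs] A(1) Aeq by simp
  then obtain t u where tu: "norm u = 1" "\<forall>q. classical_mobius (a, c, b, d) q = classical_mobius (Hmat t) q * u"
    using form_from_real A(1) Aeq by blast
  have "f = restrict (\<lambda>q. classical_mobius (Hmat t) q * u) (ball 0 1)"
    unfolding A(2) Aeq by (rule restrict_ext) (rule tu(2)[rule_format])
  then show "f \<in> {restrict (\<lambda>q. classical_mobius (Hmat t) q * u) (ball 0 1) | t u. norm u = 1}"
    using tu(1) by blast
next
  fix f
  assume "f \<in> {restrict (\<lambda>q. classical_mobius (Hmat t) q * u) (ball 0 1) | t u. norm u = 1}"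
  then obtain t u where f: "f = restrict (\<lambda>q. classical_mobius (Hmat t) q * u) (ball 0 1)" and nu: "norm u = 1"
    by blast
  define A where "A = (qof_real (cosh t) * u, qof_real (sinh t), qof_real (sinh t) * u, qof_real (cosh t))"
  note S = super[where t=t and u=u, OF nu, folded A_def]
  have "f = restrict (classical_mobius A) (ball 0 1)"
    unfolding f by (intro restrict_ext) (simp add: S(2))
  moreover have "f = restrict (regular_mobius A) (ball 0 1)"
    unfolding f by (intro restrict_ext) (simp add: S(3))
  ultimately show "f \<in> {restrict (classical_mobius A) (ball 0 1) | A. A \<in> Sp11}
           \<inter> {restrict (regular_mobius A) (ball 0 1) | A. A \<in> Sp11}"
    using S(1) by blast
qed

end
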